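(* Let $Q$ be a quiver and $C\subseteq\Bbbk Q$ a subcoalgebra. (1) Every finite dimensional right coideal of $C$ is contained in a right coideal of $C$ generated by multipaths in $C$. (2) Let $I$ be a finitely generated right coideal of $C$ and let $B$ be a generating set of $I$ (as a right coideal) whose elements are multipaths in $C$. Then there is a finite independent set $F\subseteq B$ that generates $I$.
   Context: $\Bbbk$ is a field. The path coalgebra $\Bbbk Q$ has basis all paths of $Q$ (including trivial paths, identified with vertices), with $\Delta(p)=\sum_{xy=p}x\otimes y$ ($xy$ = concatenation) and $\varepsilon(p)=1$ if $p$ is trivial, $0$ otherwise. A right coideal of $C$ is a subspace $I$ with $\Delta(I)\subseteq I\otimes C$; for $x\in C$, $\langle x\rangle^C$ is the smallest right coideal of $C$ containing $x$, and a right coideal is generated by a set if it is the smallest right coideal containing it. A multipath is a nonzero linear combination of paths all sharing the same source and the same target; $M(C)$ is the set of multipaths in $C$. A subset $F\subseteq M(C)$ is independent if it is linearly independent and $\langle x\rangle^C\cap F=\{x\}$ for each $x\in F$. *)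

theory Defs
  imports Complex_Main "HOL-Library.Function_Algebras"
begin

text \<open>A quiver is given by source and target maps src, tgt from arrows to vertices.
A path is a pair (v, as): start vertex v and a list of composable arrows
(as = [] is the trivial path at v).  Concatenation xy means: first x, then y.\<close>

definition is_path :: "('a \<Rightarrow> 'v) \<Rightarrow> ('a \<Rightarrow> 'v) \<Rightarrow> 'v \<times> 'a list \<Rightarrow> bool" where
  "is_path src tgt p = (snd p = [] \<or>
     (src (hd (snd p)) = fst p \<and>
      (\<forall>i. Suc i < length (snd p) \<longrightarrow> tgt (snd p ! i) = src (snd p ! Suc i))))"

definition psource :: "'v \<times> 'a list \<Rightarrow> 'v" where
  "psource p = fst p"

definition ptarget :: "('a \<Rightarrow> 'v) \<Rightarrow> 'v \<times> 'a list \<Rightarrow> 'v" where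
  "ptarget tgt p = (if snd p = [] then fst p else tgt (last (snd p)))"

definition pathcoalg :: "('a \<Rightarrow> 'v) \<Rightarrow> ('a \<Rightarrow> 'v) \<Rightarrow> ('v \<times> 'a list \<Rightarrow> 'k::field) set" where
  "pathcoalg src tgt = {f. finite {p. f p \<noteq> 0} \<and> (\<forall>p. f p \<noteq> 0 \<longrightarrow> is_path src tgt p)}"

definition scalef :: "'k::field \<Rightarrow> ('b \<Rightarrow> 'k) \<Rightarrow> ('b \<Rightarrow> 'k)" where
  "scalef c f = (\<lambda>x. c * f x)"

text \<open>Tensor product of subspaces A, B of kQ inside kQ \<otimes> kQ (functions on pairs of paths).\<close>
definition tensor :: "('b \<Rightarrow> 'k::field) set \<Rightarrow> ('b \<Rightarrow> 'k) set \<Rightarrow> ('b \<times> 'b \<Rightarrow> 'k) set" where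
  "tensor A B = module.span scalef {(\<lambda>(p, q). x p * y q) | x y. x \<in> A \<and> y \<in> B}"

text \<open>Comultiplication, the linear extension of Delta(p) = sum over xy = p of x \<otimes> y:
the coefficient of x \<otimes> y in Delta(f) is the coefficient of xy in f.\<close>
definition Delta :: "('a \<Rightarrow> 'v) \<Rightarrow> ('a \<Rightarrow> 'v) \<Rightarrow> ('v \<times> 'a list \<Rightarrow> 'k::field)
    \<Rightarrow> ('v \<times> 'a list) \<times> ('v \<times> 'a list) \<Rightarrow> 'k" where
  "Delta src tgt f = (\<lambda>(x, y). if is_path src tgt x \<and> is_path src tgt y \<and> ptarget tgt x = psource y
       then f (psource x, snd x @ snd y) else 0)"

definition subcoalgebra :: "('a \<Rightarrow> 'v) \<Rightarrow> ('a \<Rightarrow> 'v) \<Rightarrow> ('v \<times> 'a list \<Rightarrow> 'k::field) set \<Rightarrow> bool" where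
  "subcoalgebra src tgt C = (C \<subseteq> pathcoalg src tgt \<and> module.subspace scalef C \<and>
      Delta src tgt ` C \<subseteq> tensor C C)"

definition right_coideal :: "('a \<Rightarrow> 'v) \<Rightarrow> ('a \<Rightarrow> 'v) \<Rightarrow> ('v \<times> 'a list \<Rightarrow> 'k::field) set
    \<Rightarrow> ('v \<times> 'a list \<Rightarrow> 'k) set \<Rightarrow> bool" where
  "right_coideal src tgt C I = (I \<subseteq> C \<and> module.subspace scalef I \<and>
      Delta src tgt ` I \<subseteq> tensor I C)"

definition generates :: "('a \<Rightarrow> 'v) \<Rightarrow> ('a \<Rightarrow> 'v) \<Rightarrow> ('v \<times> 'a list \<Rightarrow> 'k::field) set
    \<Rightarrow> ('v \<times> 'a list \<Rightarrow> 'k) set \<Rightarrow> ('v \<times> 'a list \<Rightarrow> 'k) set \<Rightarrow> bool" where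
  "generates src tgt C X I = (right_coideal src tgt C I \<and> X \<subseteq> I \<and>
      (\<forall>J. right_coideal src tgt C J \<and> X \<subseteq> J \<longrightarrow> I \<subseteq> J))"

definition coideal_gen :: "('a \<Rightarrow> 'v) \<Rightarrow> ('a \<Rightarrow> 'v) \<Rightarrow> ('v \<times> 'a list \<Rightarrow> 'k::field) set
    \<Rightarrow> ('v \<times> 'a list \<Rightarrow> 'k) \<Rightarrow> ('v \<times> 'a list \<Rightarrow> 'k) set" where
  "coideal_gen src tgt C x = (THE I. generates src tgt C {x} I)"

definition multipath :: "('a \<Rightarrow> 'v) \<Rightarrow> ('a \<Rightarrow> 'v) \<Rightarrow> ('v \<times> 'a list \<Rightarrow> 'k::field) \<Rightarrow> bool" where
  "multipath src tgt f = (f \<in> pathcoalg src tgt \<and> f \<noteq> 0 \<and>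
      (\<exists>v w. \<forall>p. f p \<noteq> 0 \<longrightarrow> psource p = v \<and> ptarget tgt p = w))"

definition multipaths :: "('a \<Rightarrow> 'v) \<Rightarrow> ('a \<Rightarrow> 'v) \<Rightarrow> ('v \<times> 'a list \<Rightarrow> 'k::field) set
    \<Rightarrow> ('v \<times> 'a list \<Rightarrow> 'k) set" where
  "multipaths src tgt C = {f \<in> C. multipath src tgt f}"

definition independent_mp :: "('a \<Rightarrow> 'v) \<Rightarrow> ('a \<Rightarrow> 'v) \<Rightarrow> ('v \<times> 'a list \<Rightarrow> 'k::field) set
    \<Rightarrow> ('v \<times> 'a list \<Rightarrow> 'k) set \<Rightarrow> bool" where
  "independent_mp src tgt C F = (F \<subseteq> multipaths src tgt C \<and> \<not> module.dependent scalef F \<and>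
      (\<forall>x\<in>F. coideal_gen src tgt C x \<inter> F = {x}))"

definition finite_dim :: "('b \<Rightarrow> 'k::field) set \<Rightarrow> bool" where
  "finite_dim I = (\<exists>S. finite S \<and> S \<subseteq> I \<and> I \<subseteq> module.span scalef S)"

end

theory Submission imports Defs begin

interpretation V: vector_space "scalef :: 'k::field \<Rightarrow> ('b \<Rightarrow> 'k) \<Rightarrow> ('b \<Rightarrow> 'k)"
  by unfold_locales (auto simp: scalef_def fun_eq_iff algebra_simps)

lemma scalef_apply[simp]: "scalef c f x = c * f x" by (simp add: scalef_def)

lemma sum_fun_apply: "(sum f A) x = (\<Sum>a\<in>A. f a x)"
  by (induction A rule: infinite_finite_induct) auto

definition tens :: "('b \<Rightarrow> 'k::field) \<Rightarrow> ('c \<Rightarrow> 'k) \<Rightarrow> ('b \<times> 'c \<Rightarrow> 'k)" where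
  "tens x y = (\<lambda>(p,q). x p * y q)"

lemma tensor_alt: "tensor A B = V.span {tens x y | x y. x \<in> A \<and> y \<in> B}"
  by (simp add: tensor_def tens_def)

lemma tensor_mono: "A \<subseteq> A' \<Longrightarrow> tensor A B \<subseteq> tensor A' B"
  unfolding tensor_alt by (rule V.span_mono) blast

lemma tensor_col:
  assumes A: "V.subspace A" and h: "h \<in> tensor A B"
  shows "(\<lambda>p. h (p,q)) \<in> A"
proof -
  have "(\<lambda>p. h (p,q)) \<in> A"
    using h unfolding tensor_alt
  proof (rule V.span_induct[where P="\<lambda>h. (\<lambda>p. h (p,q)) \<in> A"])
    show "V.subspace {h. (\<lambda>p. h (p,q)) \<in> A}"
    proof (rule V.subspaceI)
      show "0 \<in> {h. (\<lambda>p. h (p,q)) \<in> A}" using V.subspace_0[OF A] by (simp add: zero_fun_def)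
    next
      fix x y assume "x \<in> {h. (\<lambda>p. h (p,q)) \<in> A}" "y \<in> {h. (\<lambda>p. h (p,q)) \<in> A}"
      then have "(\<lambda>p. x (p,q)) + (\<lambda>p. y (p,q)) \<in> A" using V.subspace_add[OF A] by auto
      moreover have "(\<lambda>p. (x + y) (p,q)) = (\<lambda>p. x (p,q)) + (\<lambda>p. y (p,q))" by auto
      ultimately show "x + y \<in> {h. (\<lambda>p. h (p,q)) \<in> A}" by simp
    next
      fix c x assume "x \<in> {h. (\<lambda>p. h (p,q)) \<in> A}"
      then have "scalef c (\<lambda>p. x (p,q)) \<in> A" using V.subspace_scale[OF A] by auto
      moreover have "(\<lambda>p. scalef c x (p,q)) = scalef c (\<lambda>p. x (p,q))" by auto
      ultimately show "scalef c x \<in> {h. (\<lambda>p. h (p,q)) \<in> A}" by simp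
    qed
  next
    fix g assume "g \<in> {tens x y | x y. x \<in> A \<and> y \<in> B}"
    then obtain x y where g: "g = tens x y" "x \<in> A" by auto
    have "(\<lambda>p. g (p,q)) = scalef (y q) x" by (auto simp: g tens_def fun_eq_iff mult.commute)
    then show "(\<lambda>p. g (p,q)) \<in> A" using V.subspace_scale[OF A g(2)] by simp
  qed
  then show ?thesis by simp
qed

lemma tensor_row:
  assumes B: "V.subspace B" and h: "h \<in> tensor A B"
  shows "(\<lambda>q. h (p,q)) \<in> B"
proof -
  have "(\<lambda>q. h (p,q)) \<in> B"
    using h unfolding tensor_alt
  proof (rule V.span_induct[where P="\<lambda>h. (\<lambda>q. h (p,q)) \<in> B"])
    show "V.subspace {h. (\<lambda>q. h (p,q)) \<in> B}"
    proof (rule V.subspaceI)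
      show "0 \<in> {h. (\<lambda>q. h (p,q)) \<in> B}" using V.subspace_0[OF B] by (simp add: zero_fun_def)
    next
      fix x y assume "x \<in> {h. (\<lambda>q. h (p,q)) \<in> B}" "y \<in> {h. (\<lambda>q. h (p,q)) \<in> B}"
      then have "(\<lambda>q. x (p,q)) + (\<lambda>q. y (p,q)) \<in> B" using V.subspace_add[OF B] by auto
      moreover have "(\<lambda>q. (x + y) (p,q)) = (\<lambda>q. x (p,q)) + (\<lambda>q. y (p,q))" by auto
      ultimately show "x + y \<in> {h. (\<lambda>q. h (p,q)) \<in> B}" by simp
    next
      fix c x assume "x \<in> {h. (\<lambda>q. h (p,q)) \<in> B}"
      then have "scalef c (\<lambda>q. x (p,q)) \<in> B" using V.subspace_scale[OF B] by auto
      moreover have "(\<lambda>q. scalef c x (p,q)) = scalef c (\<lambda>q. x (p,q))" by auto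
      ultimately show "scalef c x \<in> {h. (\<lambda>q. h (p,q)) \<in> B}" by simp
    qed
  next
    fix g assume "g \<in> {tens x y | x y. x \<in> A \<and> y \<in> B}"
    then obtain x y where g: "g = tens x y" "y \<in> B" by auto
    have "(\<lambda>q. g (p,q)) = scalef (x p) y" by (auto simp: g tens_def fun_eq_iff)
    then show "(\<lambda>q. g (p,q)) \<in> B" using V.subspace_scale[OF B g(2)] by simp
  qed
  then show ?thesis by simp
qed

definition TL :: "(('b \<Rightarrow> 'k::field) \<times> ('c \<Rightarrow> 'k)) list \<Rightarrow> ('b \<times> 'c \<Rightarrow> 'k)" where
  "TL L = sum_list (map (\<lambda>(x,y). tens x y) L)"

lemma TL_Nil[simp]: "TL [] = 0" by (simp add: TL_def)
lemma TL_Cons[simp]: "TL ((x,y)#L) = tens x y + TL L" by (simp add: TL_def)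

lemma TL_apply: "TL L (p,r) = (\<Sum>(u,w)\<leftarrow>L. u p * w r)"
  by (induction L) (auto simp: tens_def)

lemma span_to_list:
  assumes A: "V.subspace A" and h: "h \<in> tensor A B"
  shows "\<exists>L. set L \<subseteq> A \<times> B \<and> h = TL L"
  using h unfolding tensor_alt
proof (induction rule: V.span_induct_alt)
  case base
  then show ?case by (intro exI[of _ "[]"]) simp
next
  case (step c g h)
  then obtain x y where g: "g = tens x y" "x \<in> A" "y \<in> B" by auto
  from step obtain L where L: "set L \<subseteq> A \<times> B" "h = TL L" by auto
  have "scalef c g + h = TL ((scalef c x, y) # L)"
    by (auto simp: g L tens_def fun_eq_iff)
  moreover have "scalef c x \<in> A" using V.subspace_scale[OF A g(2)] .
  ultimately show ?case using L g by (intro exI[of _ "(scalef c x, y) # L"]) auto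
qed

lemma sum_list_aux:
  fixes c d :: "'k::field"
  shows "(\<Sum>(u,w)\<leftarrow>L. u p * (w r - w q / c * d)) =
         (\<Sum>(u,w)\<leftarrow>L. u p * w r) - (\<Sum>(u,w)\<leftarrow>L. u p * w q) * d / c"
  by (induction L) (auto simp: algebra_simps add_divide_distrib diff_divide_distrib)


lemma TL_in_tensor:
  assumes A: "V.subspace A" and C: "V.subspace C"
  shows "set (map snd L) \<subseteq> C \<Longrightarrow> (\<forall>q. (\<lambda>p. TL L (p,q)) \<in> A) \<Longrightarrow> TL L \<in> tensor A C"
proof (induction "length L" arbitrary: L)
  case 0
  then have "TL L = 0" by simp
  then show ?case unfolding tensor_alt by (simp only: V.span_zero)
next
  case (Suc n)
  then obtain x y L0 where L: "L = (x,y) # L0" by (cases L) auto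
  have yC: "y \<in> C" and L0C: "set (map snd L0) \<subseteq> C" using Suc.prems(1) L by auto
  have len: "n = length L0" using Suc.hyps(2) L by simp
  show ?case
  proof (cases "y = 0")
    case True
    have eq: "TL L = TL L0" using True by (auto simp: L tens_def fun_eq_iff)
    have "TL L0 \<in> tensor A C"
      using Suc.hyps(1)[OF len L0C] Suc.prems(2) eq by simp
    then show ?thesis using eq by simp
  next
    case False
    then obtain q0 where q0: "y q0 \<noteq> 0" by (auto simp: fun_eq_iff)
    define a where "a = (\<lambda>p. TL L (p,q0))"
    have aA: "a \<in> A" using Suc.prems(2) by (simp add: a_def)
    define L1 where "L1 = map (\<lambda>(u,w). (u, w - scalef (w q0 / y q0) y)) L0"
    define g where "g = tens (scalef (1 / y q0) a) y"
    have key: "TL L = TL L1 + g"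
    proof -
      have "TL L (p,r) = TL L1 (p,r) + g (p,r)" for p r
      proof -
        have "TL L1 (p,r) = (\<Sum>(u,w)\<leftarrow>L0. u p * (w r - w q0 / y q0 * y r))"
          unfolding TL_apply L1_def by (induction L0) auto
        also have "\<dots> = (\<Sum>(u,w)\<leftarrow>L0. u p * w r) - (\<Sum>(u,w)\<leftarrow>L0. u p * w q0) * y r / y q0"
          by (rule sum_list_aux)
        finally have 1: "TL L1 (p,r) = \<dots>" .
        have 2: "g (p,r) = (x p * y q0 + (\<Sum>(u,w)\<leftarrow>L0. u p * w q0)) * y r / y q0"
          by (simp add: g_def tens_def a_def TL_apply L)
        have 3: "TL L (p,r) = x p * y r + (\<Sum>(u,w)\<leftarrow>L0. u p * w r)"
          by (simp add: TL_apply L tens_def)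
        show ?thesis unfolding 1 2 3 using q0 by (simp add: field_simps)
      qed
      then show ?thesis by (auto simp: fun_eq_iff)
    qed
    have L1C: "set (map snd L1) \<subseteq> C"
      using L0C yC by (auto simp: L1_def intro!: V.subspace_diff[OF C] V.subspace_scale[OF C])
    have cols: "\<forall>q. (\<lambda>p. TL L1 (p,q)) \<in> A"
    proof
      fix q
      have "(\<lambda>p. TL L1 (p,q)) = (\<lambda>p. TL L (p,q)) - scalef (y q / y q0) a"
        using key by (auto simp: fun_eq_iff g_def tens_def)
      then show "(\<lambda>p. TL L1 (p,q)) \<in> A"
        using Suc.prems(2) aA by (auto intro!: V.subspace_diff[OF A] V.subspace_scale[OF A])
    qed
    have "TL L1 \<in> tensor A C" using Suc.hyps(1)[of L1] len L1C cols by (simp add: L1_def)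
    moreover have "g \<in> tensor A C" unfolding tensor_alt g_def
      using V.subspace_scale[OF A aA] yC by (intro V.span_base) blast
    ultimately show ?thesis unfolding key tensor_alt by (rule V.span_add)
  qed
qed


definition gen where
  "gen src tgt C S = \<Inter>{J. right_coideal src tgt C J \<and> S \<subseteq> J}"

context
  fixes src tgt :: "'a \<Rightarrow> 'v" and C :: "('v \<times> 'a list \<Rightarrow> 'k::field) set"
  assumes sc: "subcoalgebra src tgt C"
begin

lemma C_sub: "V.subspace C" using sc by (simp add: subcoalgebra_def)

lemma rc_C: "right_coideal src tgt C C"
  using sc by (simp add: subcoalgebra_def right_coideal_def)

lemma gen_generates:
  assumes S: "S \<subseteq> C"
  shows "generates src tgt C S (gen src tgt C S)"
proof -
  let ?F = "{J. right_coideal src tgt C J \<and> S \<subseteq> J}"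
  let ?G = "gen src tgt C S"
  have CF: "C \<in> ?F" using rc_C S by simp
  have GC: "?G \<subseteq> C" using CF unfolding gen_def by blast
  have Gsub: "V.subspace ?G" unfolding gen_def
    by (rule V.subspace_Inter) (auto simp: right_coideal_def)
  have "Delta src tgt x \<in> tensor ?G C" if x: "x \<in> ?G" for x
  proof -
    have xC: "x \<in> C" using x GC by blast
    have "Delta src tgt x \<in> tensor C C" using sc xC by (auto simp: subcoalgebra_def)
    then obtain L where L: "set L \<subseteq> C \<times> C" "Delta src tgt x = TL L"
      using span_to_list[OF C_sub] by blast
    have cols: "\<forall>q. (\<lambda>p. TL L (p,q)) \<in> ?G"
    proof
      fix q
      have "(\<lambda>p. TL L (p,q)) \<in> J" if J: "J \<in> ?F" for J
      proof -
        have "x \<in> J" using x J unfolding gen_def by blast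
        then have "Delta src tgt x \<in> tensor J C" using J by (auto simp: right_coideal_def)
        moreover have "V.subspace J" using J by (simp add: right_coideal_def)
        ultimately show ?thesis using tensor_col L(2) by metis
      qed
      then show "(\<lambda>p. TL L (p,q)) \<in> ?G" unfolding gen_def by blast
    qed
    have "set (map snd L) \<subseteq> C" using L(1) by auto
    from TL_in_tensor[OF Gsub C_sub this cols] show ?thesis using L(2) by simp
  qed
  then have "right_coideal src tgt C ?G" using GC Gsub by (auto simp: right_coideal_def)
  moreover have "S \<subseteq> ?G" unfolding gen_def by blast
  moreover have "\<forall>J. right_coideal src tgt C J \<and> S \<subseteq> J \<longrightarrow> ?G \<subseteq> J"
    unfolding gen_def by blast
  ultimately show ?thesis by (simp add: generates_def)
qed

lemma generates_gen: "generates src tgt C S I \<Longrightarrow> I = gen src tgt C S"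
proof -
  assume g: "generates src tgt C S I"
  then have SC: "S \<subseteq> C" by (auto simp: generates_def right_coideal_def)
  show ?thesis using g gen_generates[OF SC] unfolding generates_def by blast
qed

lemma coideal_gen_eq: "x \<in> C \<Longrightarrow> coideal_gen src tgt C x = gen src tgt C {x}"
  unfolding coideal_gen_def
  by (rule the_equality) (simp_all add: gen_generates generates_gen)

lemma gen_min: "right_coideal src tgt C J \<Longrightarrow> S \<subseteq> J \<Longrightarrow> gen src tgt C S \<subseteq> J"
  unfolding gen_def by blast

lemma gen_rc: "S \<subseteq> C \<Longrightarrow> right_coideal src tgt C (gen src tgt C S)"
  using gen_generates by (simp add: generates_def)

lemma gen_sup: "S \<subseteq> C \<Longrightarrow> S \<subseteq> gen src tgt C S"
  using gen_generates by (simp add: generates_def)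

lemma gen_mono: "S \<subseteq> T \<Longrightarrow> T \<subseteq> C \<Longrightarrow> gen src tgt C S \<subseteq> gen src tgt C T"
  by (meson gen_min gen_rc gen_sup order_trans)


lemma C_path: "C \<subseteq> pathcoalg src tgt" using sc by (simp add: subcoalgebra_def)

lemma Delta_left:
  assumes f: "f \<in> pathcoalg src tgt"
  shows "Delta src tgt f ((v,[]), q) = (if fst q = v then f q else 0)"
proof -
  have "f q \<noteq> 0 \<Longrightarrow> is_path src tgt q" using f unfolding pathcoalg_def by blast
  then show ?thesis
    by (cases q) (auto simp: Delta_def is_path_def ptarget_def psource_def)
qed

lemma Delta_right:
  assumes f: "f \<in> pathcoalg src tgt"
  shows "Delta src tgt f (p, (w,[])) = (if ptarget tgt p = w then f p else 0)"
proof -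
  have "f p \<noteq> 0 \<Longrightarrow> is_path src tgt p" using f unfolding pathcoalg_def by blast
  then show ?thesis
    by (cases p) (auto simp: Delta_def is_path_def ptarget_def psource_def)
qed

lemma restrict_in_C:
  assumes fC: "f \<in> C"
  shows "(\<lambda>p. if fst p = v \<and> ptarget tgt p = w then f p else 0) \<in> C"
proof -
  define h where "h = (\<lambda>q. if fst q = v then f q else 0)"
  have "Delta src tgt f \<in> tensor C C" using sc fC by (auto simp: subcoalgebra_def)
  from tensor_row[OF C_sub this, of "(v,[])"]
  have "(\<lambda>q. Delta src tgt f ((v,[]), q)) \<in> C" .
  moreover have "(\<lambda>q. Delta src tgt f ((v,[]), q)) = h"
    using Delta_left[of f v] fC C_path by (auto simp: h_def fun_eq_iff simp del: Delta_def)
  ultimately have hC: "h \<in> C" by simp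
  have "Delta src tgt h \<in> tensor C C" using sc hC by (auto simp: subcoalgebra_def)
  from tensor_col[OF C_sub this, of "(w,[])"]
  have "(\<lambda>p. Delta src tgt h (p, (w,[]))) \<in> C" .
  moreover have "(\<lambda>p. Delta src tgt h (p, (w,[]))) = (\<lambda>p. if ptarget tgt p = w then h p else 0)"
    using Delta_right[of h _ w] hC C_path by (auto simp: fun_eq_iff)
  ultimately have "(\<lambda>p. if ptarget tgt p = w then h p else 0) \<in> C" by simp
  moreover have "(\<lambda>p. if ptarget tgt p = w then h p else 0) =
      (\<lambda>p. if fst p = v \<and> ptarget tgt p = w then f p else 0)"
    by (auto simp: h_def fun_eq_iff)
  ultimately show ?thesis by simp
qed

lemma C_span_mp: "C \<subseteq> V.span (multipaths src tgt C)"
proof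
  fix f assume fC: "f \<in> C"
  then have fp: "f \<in> pathcoalg src tgt" using C_path by blast
  define R where "R = (\<lambda>vw p. if fst p = fst vw \<and> ptarget tgt p = snd vw then f p else 0)"
  define P where "P = (\<lambda>p. (fst p, ptarget tgt p)) ` {p. f p \<noteq> 0}"
  have finP: "finite P" using fp by (auto simp: P_def pathcoalg_def)
  have feq: "f = (\<Sum>vw\<in>P. R vw)"
  proof
    fix p
    have "(\<Sum>vw\<in>P. R vw) p = (\<Sum>vw\<in>P. if vw = (fst p, ptarget tgt p) then f p else 0)"
      unfolding sum_fun_apply R_def by (intro sum.cong) auto
    also have "\<dots> = (if (fst p, ptarget tgt p) \<in> P then f p else 0)"
      using finP by (simp add: sum.delta')
    also have "\<dots> = f p" by (auto simp: P_def)
    finally show "f p = (\<Sum>vw\<in>P. R vw) p" by simp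
  qed
  have "R vw \<in> V.span (multipaths src tgt C)" for vw
  proof (cases "R vw = 0")
    case True then show ?thesis by (simp add: V.span_zero)
  next
    case False
    have RC: "R vw \<in> C" unfolding R_def using restrict_in_C[OF fC] by simp
    have "R vw \<in> pathcoalg src tgt"
    proof -
      have "{p. R vw p \<noteq> 0} \<subseteq> {p. f p \<noteq> 0}" by (auto simp: R_def)
      then have "finite {p. R vw p \<noteq> 0}" using fp finite_subset by (auto simp: pathcoalg_def)
      moreover have "\<forall>p. R vw p \<noteq> 0 \<longrightarrow> is_path src tgt p"
        using fp unfolding pathcoalg_def R_def by auto
      ultimately show ?thesis unfolding pathcoalg_def by blast
    qed
    moreover have "\<forall>p. R vw p \<noteq> 0 \<longrightarrow> psource p = fst vw \<and> ptarget tgt p = snd vw"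
      by (auto simp: R_def psource_def split: if_splits)
    ultimately have "multipath src tgt (R vw)" using False by (auto simp: multipath_def)
    then show ?thesis using RC by (intro V.span_base) (simp add: multipaths_def)
  qed
  then show "f \<in> V.span (multipaths src tgt C)"
    by (subst feq) (rule V.span_sum)
qed

lemma part1: "generates src tgt C (multipaths src tgt C) C"
proof -
  have "\<forall>J. right_coideal src tgt C J \<and> multipaths src tgt C \<subseteq> J \<longrightarrow> C \<subseteq> J"
  proof (intro allI impI)
    fix J assume J: "right_coideal src tgt C J \<and> multipaths src tgt C \<subseteq> J"
    then have "V.span (multipaths src tgt C) \<subseteq> J"
      by (intro V.span_minimal) (auto simp: right_coideal_def)
    then show "C \<subseteq> J" using C_span_mp by blast
  qed
  then show ?thesis using rc_C by (auto simp: generates_def multipaths_def)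
qed


lemma part2:
  assumes I: "right_coideal src tgt C I" and X: "finite X" "generates src tgt C X I"
    and B: "B \<subseteq> multipaths src tgt C" "generates src tgt C B I"
  shows "\<exists>F. F \<subseteq> B \<and> finite F \<and> independent_mp src tgt C F \<and> generates src tgt C F I"
proof -
  have BC: "B \<subseteq> C" using B(1) by (auto simp: multipaths_def)
  have BI: "B \<subseteq> I" using B(2) by (simp add: generates_def)
  have XI: "X \<subseteq> I" using X(2) by (simp add: generates_def)
  have IC: "I \<subseteq> C" using I by (simp add: right_coideal_def)
  define U where "U = \<Union>{gen src tgt C F | F. finite F \<and> F \<subseteq> B}"
  have U_iff: "x \<in> U \<longleftrightarrow> (\<exists>F. finite F \<and> F \<subseteq> B \<and> x \<in> gen src tgt C F)" for x
    unfolding U_def by auto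
  have genC: "gen src tgt C F \<subseteq> C" if "F \<subseteq> C" for F
    using gen_rc[OF that] by (simp add: right_coideal_def)
  have genS: "V.subspace (gen src tgt C F)" if "F \<subseteq> C" for F
    using gen_rc[OF that] by (simp add: right_coideal_def)
  have two: "\<exists>F. finite F \<and> F \<subseteq> B \<and> x \<in> gen src tgt C F \<and> y \<in> gen src tgt C F"
    if "x \<in> U" "y \<in> U" for x y
  proof -
    have "\<exists>F. finite F \<and> F \<subseteq> B \<and> x \<in> gen src tgt C F"
      using that(1) unfolding U_iff by blast
    then obtain F1 where F1: "finite F1" "F1 \<subseteq> B" "x \<in> gen src tgt C F1"
      by blast
    have "\<exists>F. finite F \<and> F \<subseteq> B \<and> y \<in> gen src tgt C F"
      using that(2) unfolding U_iff by blast
    then obtain F2 where F2: "finite F2" "F2 \<subseteq> B" "y \<in> gen src tgt C F2"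
      by blast
    note F = F1 F2
    have U12: "F1 \<union> F2 \<subseteq> C" using F(2,5) BC by blast
    have g1: "gen src tgt C F1 \<subseteq> gen src tgt C (F1 \<union> F2)"
      by (rule gen_mono[OF _ U12]) blast
    have g2: "gen src tgt C F2 \<subseteq> gen src tgt C (F1 \<union> F2)"
      by (rule gen_mono[OF _ U12]) blast
    have "finite (F1 \<union> F2)" "F1 \<union> F2 \<subseteq> B" using F(1,2,4,5) by auto
    moreover have "x \<in> gen src tgt C (F1 \<union> F2)" "y \<in> gen src tgt C (F1 \<union> F2)"
      using g1 g2 F(3,6) by blast+
    ultimately show ?thesis by blast
  qed
  have Urc: "right_coideal src tgt C U"
    unfolding right_coideal_def
  proof (intro conjI)
    show "U \<subseteq> C"
    proof
      fix z assume "z \<in> U"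
      then obtain F where "F \<subseteq> B" "z \<in> gen src tgt C F" unfolding U_iff by blast
      then show "z \<in> C" using genC[of F] BC by blast
    qed
    show "V.subspace U"
    proof (rule V.subspaceI)
      have "0 \<in> gen src tgt C {}" using V.subspace_0[OF genS[OF empty_subsetI]] .
      then show "0 \<in> U" unfolding U_iff by blast
    next
      fix x y assume "x \<in> U" "y \<in> U"
      then obtain F where F: "finite F" "F \<subseteq> B" "x \<in> gen src tgt C F" "y \<in> gen src tgt C F"
        using two by blast
      have "F \<subseteq> C" using F BC by blast
      then have "x + y \<in> gen src tgt C F" using V.subspace_add[OF genS[OF \<open>F \<subseteq> C\<close>]] F by blast
      then show "x + y \<in> U" using F unfolding U_iff by blast
    next
      fix c x assume "x \<in> U"
      then obtain F where F: "finite F" "F \<subseteq> B" "x \<in> gen src tgt C F"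
        unfolding U_iff by blast
      have "F \<subseteq> C" using F BC by blast
      then have "scalef c x \<in> gen src tgt C F" using V.subspace_scale[OF genS[OF \<open>F \<subseteq> C\<close>]] F by blast
      then show "scalef c x \<in> U" using F unfolding U_iff by blast
    qed
    show "Delta src tgt ` U \<subseteq> tensor U C"
    proof
      fix z assume "z \<in> Delta src tgt ` U"
      then obtain x where x: "x \<in> U" "z = Delta src tgt x" by blast
      then obtain F where F: "finite F" "F \<subseteq> B" "x \<in> gen src tgt C F"
        unfolding U_iff by blast
      have "z \<in> tensor (gen src tgt C F) C"
        using gen_rc[of F] F BC x by (auto simp: right_coideal_def)
      moreover have "gen src tgt C F \<subseteq> U" using F U_iff by blast
      ultimately show "z \<in> tensor U C" using tensor_mono by blast
    qed
  qed
  have "B \<subseteq> U"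
  proof
    fix b assume "b \<in> B"
    then have "b \<in> gen src tgt C {b}" using gen_sup[of "{b}"] BC by blast
    then show "b \<in> U" using \<open>b \<in> B\<close> unfolding U_iff by blast
  qed
  then have IU: "I \<subseteq> U" using B(2) Urc by (simp add: generates_def)
  have "\<forall>x\<in>X. \<exists>F. finite F \<and> F \<subseteq> B \<and> x \<in> gen src tgt C F"
  proof
    fix x assume "x \<in> X"
    then have "x \<in> U" using XI IU by blast
    then show "\<exists>F. finite F \<and> F \<subseteq> B \<and> x \<in> gen src tgt C F" by (simp only: U_iff)
  qed
  from bchoice[OF this] obtain Fx where
    Fx0: "\<forall>x\<in>X. finite (Fx x) \<and> Fx x \<subseteq> B \<and> x \<in> gen src tgt C (Fx x)" by (elim exE)
  have Fx: "finite (Fx x) \<and> Fx x \<subseteq> B \<and> x \<in> gen src tgt C (Fx x)" if "x \<in> X" for x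
    using Fx0 that by (rule bspec)
  define F0 where "F0 = \<Union>(Fx ` X)"
  have F0: "finite F0" "F0 \<subseteq> B" using Fx X(1) unfolding F0_def by auto
  have "X \<subseteq> gen src tgt C F0"
  proof
    fix x assume x: "x \<in> X"
    have "Fx x \<subseteq> F0" using x by (auto simp: F0_def)
    then have "gen src tgt C (Fx x) \<subseteq> gen src tgt C F0"
      using F0(2) BC by (intro gen_mono) auto
    then show "x \<in> gen src tgt C F0" using Fx[OF x] by blast
  qed
  moreover have "right_coideal src tgt C (gen src tgt C F0)" using gen_rc[of F0] F0 BC by blast
  ultimately have "I \<subseteq> gen src tgt C F0" using X(2) unfolding generates_def by blast
  moreover have "gen src tgt C F0 \<subseteq> I" using gen_min[OF I] F0 BI by blast
  ultimately have genF0: "gen src tgt C F0 = I" by blast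
  define Pn where "Pn = (\<lambda>n. \<exists>F. F \<subseteq> F0 \<and> gen src tgt C F = I \<and> card F = n)"
  have "Pn (card F0)" using genF0 by (auto simp: Pn_def)
  then have "Pn (LEAST n. Pn n)" by (rule LeastI)
  then obtain F where F: "F \<subseteq> F0" "gen src tgt C F = I" "card F = (LEAST n. Pn n)"
    unfolding Pn_def by blast
  have finF: "finite F" using F(1) F0(1) finite_subset by blast
  have FB: "F \<subseteq> B" using F(1) F0(2) by blast
  have FC: "F \<subseteq> C" using FB BC by blast
  have minF: "gen src tgt C F' \<noteq> I" if "F' \<subset> F" for F'
  proof
    assume g: "gen src tgt C F' = I"
    have "card F' < card F" using psubset_card_mono[OF finF that] .
    moreover have "Pn (card F')" using g that F(1) unfolding Pn_def by blast
    ultimately show False using F(3) not_less_Least[of "card F'" Pn] by simp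
  qed
  have key: "x \<notin> gen src tgt C (F - {x})" if xF: "x \<in> F" for x
  proof
    assume "x \<in> gen src tgt C (F - {x})"
    then have "F \<subseteq> gen src tgt C (F - {x})" using gen_sup[of "F - {x}"] FC by blast
    then have "gen src tgt C F \<subseteq> gen src tgt C (F - {x})" using gen_min[OF gen_rc[of "F - {x}"]] FC by blast
    moreover have "gen src tgt C (F - {x}) \<subseteq> gen src tgt C F" using FC by (intro gen_mono) auto
    ultimately have "gen src tgt C (F - {x}) = I" using F(2) by blast
    moreover have "F - {x} \<subset> F" using xF by blast
    ultimately show False using minF by blast
  qed
  have indep: "\<not> V.dependent F"
  proof
    assume "V.dependent F"
    then obtain x where x: "x \<in> F" "x \<in> V.span (F - {x})" unfolding V.dependent_def by blast
    have "V.span (F - {x}) \<subseteq> gen src tgt C (F - {x})"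
      using gen_sup[of "F - {x}"] genS[of "F - {x}"] FC by (intro V.span_minimal) auto
    then show False using key x by blast
  qed
  have cg: "coideal_gen src tgt C x \<inter> F = {x}" if xF: "x \<in> F" for x
  proof -
    have xC: "x \<in> C" using xF FC by blast
    have "x \<in> gen src tgt C {x}" using gen_sup[of "{x}"] xC by blast
    moreover have "y = x" if y: "y \<in> gen src tgt C {x}" "y \<in> F" for y
    proof (rule ccontr)
      assume "y \<noteq> x"
      then have "gen src tgt C {x} \<subseteq> gen src tgt C (F - {y})" using xF FC by (intro gen_mono) auto
      then show False using key[OF y(2)] y(1) by blast
    qed
    ultimately show ?thesis using coideal_gen_eq[OF xC] xF by blast
  qed
  have "independent_mp src tgt C F"
    unfolding independent_mp_def using FB B(1) indep cg by blast
  moreover have "generates src tgt C F I" using gen_generates[OF FC] F(2) by simp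
  ultimately show ?thesis using FB finF by blast
qed

end


theorem lemma4p20:
  fixes src tgt :: "'a \<Rightarrow> 'v" and C :: "('v \<times> 'a list \<Rightarrow> 'k::field) set"
  assumes "subcoalgebra src tgt C"
  shows "(\<forall>I. right_coideal src tgt C I \<and> finite_dim I \<longrightarrow>
            (\<exists>X J. X \<subseteq> multipaths src tgt C \<and> generates src tgt C X J \<and> I \<subseteq> J))
       \<and> (\<forall>I B. right_coideal src tgt C I \<and> (\<exists>X. finite X \<and> generates src tgt C X I) \<and>
            B \<subseteq> multipaths src tgt C \<and> generates src tgt C B I \<longrightarrow>
            (\<exists>F. F \<subseteq> B \<and> finite F \<and> independent_mp src tgt C F \<and> generates src tgt C F I))"
proof (intro conjI allI impI)
  fix I assume "right_coideal src tgt C I \<and> finite_dim I"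
  then have "I \<subseteq> C" by (simp add: right_coideal_def)
  then show "\<exists>X J. X \<subseteq> multipaths src tgt C \<and> generates src tgt C X J \<and> I \<subseteq> J"
    using part1[OF assms] by blast
next
  fix I B assume h: "right_coideal src tgt C I \<and> (\<exists>X. finite X \<and> generates src tgt C X I) \<and>
            B \<subseteq> multipaths src tgt C \<and> generates src tgt C B I"
  then obtain X where "finite X" "generates src tgt C X I" by blast
  then show "\<exists>F. F \<subseteq> B \<and> finite F \<and> independent_mp src tgt C F \<and> generates src tgt C F I"
    using part2[OF assms] h by blast
qed

end
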